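(* Consider the system $x^+=f(x,w)$, $y=h(x)+v$ and the FIE described in the context. The FIE is RGAS if the following hold: (a) the system is i-IOSS with functions $\beta\in\mathcal{KL}$, $\alpha_1,\alpha_2\in\mathcal{K}$; (b) the infimum in the FIE problem is attained for every $t$, and the cost $V_t(\chi(0)-\bar x_0,\boldsymbol\omega)$ is continuous and satisfies, for all $\chi(0),\bar x_0\in\mathbb{R}^n$, $\boldsymbol\omega\in\mathbb{B}_w$, $\boldsymbol\nu\in\mathbb{B}_v$ and all $t$, $$\underline{\rho}_x(|\chi(0)-\bar x_0|,t)+\underline{\gamma}_w(\|\boldsymbol\omega\|_{0:t-1})+\underline{\gamma}_v(\|\boldsymbol\nu\|_{0:t})\le V_t(\chi(0)-\bar x_0,\boldsymbol\omega)\le \rho_x(|\chi(0)-\bar x_0|,t)+\gamma_w(\|\boldsymbol\omega\|_{0:t-1})+\gamma_v(\|\boldsymbol\nu\|_{0:t})$$ for some $\underline{\rho}_x,\rho_x\in\mathcal{KL}$ and $\underline{\gamma}_w,\underline{\gamma}_v,\gamma_w,\gamma_v\in\mathcal{K}_\infty$; (c) $\beta(s,t)=\mu_1(s)\varphi_1(t)$, $\underline{\rho}_x(s,t)=\mu_2(s)\varphi_2(t)$ and $\rho_x(s,t)=\mu_3(s)\varphi_2(t)$ with $\mu_1,\mu_2,\mu_3\in\mathcal{K}$ and $\varphi_1,\varphi_2\in\mathcal{L}$, and for an arbitrary $\pi\in\mathcal{K}$ there is some $\pi'\in\mathcal{K}$ such that $$\mu_1\!\left(4\mu_2^{-1}\!\left(\frac{\pi(s)}{\varphi_2(t)}\right)\right)\varphi_1(t)\le\pi'(s)\quad\text{for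 all } s,t\ge0.$$
   Context: Notation: $|\cdot|$ is the Euclidean norm; for a sequence $\boldsymbol x=\{x(0),x(1),\dots\}$, $\|\boldsymbol x\|_{a:b}=\max_{a\le i\le b}|x(i)|$. $\mathcal{K}$: continuous, zero at zero, strictly increasing functions $\mathbb{R}_{\ge0}\to\mathbb{R}_{\ge0}$; $\mathcal{K}_\infty$: $\mathcal{K}$-functions tending to $\infty$; $\mathcal{L}$: continuous nonincreasing functions $\mathbb{R}_{\ge0}\to\mathbb{R}_{\ge0}$ tending to $0$; $\mathcal{KL}$: functions $\beta(s,t)$ that are $\mathcal{K}$ in $s$ for each fixed $t$ and $\mathcal{L}$ in $t$ for each fixed $s$. System: $x(t+1)=f(x(t),w(t))$, $y(t)=h(x(t))+v(t)$, with $x\in\mathbb{R}^n$, $w\in\mathbb{R}^g$, $y,v\in\mathbb{R}^p$, $f,h$ continuous and known; the initial state and disturbance sequences $\boldsymbol w,\boldsymbol v$ are unknown but bounded. $x(t;x_0,\boldsymbol w)$ denotes the state at time $t$ from $x(0)=x_0$ under disturbance $\boldsymbol w$. i-IOSS: the system $x^+=f(x,w)$, $y=h(x)$ is i-IOSS if there exist $\beta\in\mathcal{KL}$, $\alpha_1,\alpha_2\in\mathcal{K}$ such that for all initial states $x_{01},x_{02}$, disturbances $\boldsymbol w_1,\boldsymbol w_2$ and all $t\in\mathbb{I}_{\ge0}$: $|x(t;x_{01},\boldsymbol w_1)-x(t;x_{02},\boldsymbol w_2)|\le\beta(|x_{01}-x_{02}|,t)+\alpha_1(\|\boldsymbol w_1-\boldsymbol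 w_2\|_{0:t-1})+\alpha_2(\|\boldsymbol y_1-\boldsymbol y_2\|_{0:t})$, where $y_j(i)=h(x(i;x_{0j},\boldsymbol w_j))$. FIE: the measurements are $y(i)=h(x(i;x_0,\boldsymbol w))+v(i)$ and $\bar x_0$ is a prior estimate of the initial state. At time $t$ the FIE solves $\inf_{\chi(0),\boldsymbol\omega}V_t(\chi(0)-\bar x_0,\boldsymbol\omega)$ subject to $\chi(i+1)=f(\chi(i),\omega(i))$, $y(i)=h(\chi(i))+\nu(i)$ for $i\in\mathbb{I}_{0:t}$, $\boldsymbol\omega\in\mathbb{B}_w$, $\boldsymbol\nu\in\mathbb{B}_v$, where $\mathbb{B}_w,\mathbb{B}_v$ are given sets of bounded disturbance sequences; $\boldsymbol\nu$ is determined by $\chi(0),\boldsymbol\omega$ and the data. The optimal solution is denoted $(\hat x(0|t),\hat{\boldsymbol w}_t)$. RGAS: the estimate is RGAS if for all $x_0,\bar x_0$ and bounded $(\boldsymbol w,\boldsymbol v)$ there exist $\beta_x\in\mathcal{KL}$ and $\alpha_w,\alpha_v\in\mathcal{K}$ such that for all $t\in\mathbb{I}_{\ge0}$: $|x(t;x_0,\boldsymbol w)-x(t;\hat x(0|t),\hat{\boldsymbol w}_t)|\le\beta_x(|x_0-\bar x_0|,t)+\alpha_w(\|\boldsymbol w\|_{0:t-1})+\alpha_v(\|\boldsymbol v\|_{0:t})$. *)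

theory Defs
  imports "HOL-Analysis.Analysis"
begin

definition classK :: "(real \<Rightarrow> real) \<Rightarrow> bool" where
  "classK \<alpha> \<longleftrightarrow> continuous_on {0..} \<alpha> \<and> \<alpha> 0 = 0 \<and> strict_mono_on {0..} \<alpha>"

definition classKinf :: "(real \<Rightarrow> real) \<Rightarrow> bool" where
  "classKinf \<alpha> \<longleftrightarrow> classK \<alpha> \<and> filterlim \<alpha> at_top at_top"

definition classL :: "(real \<Rightarrow> real) \<Rightarrow> bool" where
  "classL \<phi> \<longleftrightarrow> continuous_on {0..} \<phi> \<and> (\<forall>t\<ge>0. \<phi> t \<ge> 0)
     \<and> (\<forall>s t. 0 \<le> s \<longrightarrow> s \<le> t \<longrightarrow> \<phi> t \<le> \<phi> s) \<and> (\<phi> \<longlongrightarrow> 0) at_top"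

definition classKL :: "(real \<Rightarrow> real \<Rightarrow> real) \<Rightarrow> bool" where
  "classKL \<beta> \<longleftrightarrow> (\<forall>t\<ge>0. classK (\<lambda>s. \<beta> s t)) \<and> (\<forall>s\<ge>0. classL (\<beta> s))"

primrec traj :: "('x \<Rightarrow> 'w \<Rightarrow> 'x) \<Rightarrow> 'x \<Rightarrow> (nat \<Rightarrow> 'w) \<Rightarrow> nat \<Rightarrow> 'x" where
  "traj f x0 w 0 = x0"
| "traj f x0 w (Suc t) = f (traj f x0 w t) (w t)"

text \<open>seg_norm w k = max over 0 <= i <= k-1 of norm (w i), i.e. the norm on 0:k-1
  (which is 0 for k = 0, the empty range).  Thus the paper's norm on 0:t-1 is seg_norm w t
  and the norm on 0:t is seg_norm w (Suc t).\<close>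

definition seg_norm :: "(nat \<Rightarrow> 'a::real_normed_vector) \<Rightarrow> nat \<Rightarrow> real" where
  "seg_norm w k = Max (insert 0 ((\<lambda>i. norm (w i)) ` {..<k}))"

definition iIOSS ::
  "('x::real_normed_vector \<Rightarrow> 'w::real_normed_vector \<Rightarrow> 'x) \<Rightarrow> ('x \<Rightarrow> 'y::real_normed_vector)
   \<Rightarrow> (real \<Rightarrow> real \<Rightarrow> real) \<Rightarrow> (real \<Rightarrow> real) \<Rightarrow> (real \<Rightarrow> real) \<Rightarrow> bool" where
  "iIOSS f h \<beta> \<alpha>1 \<alpha>2 \<longleftrightarrow> classKL \<beta> \<and> classK \<alpha>1 \<and> classK \<alpha>2 \<and>
     (\<forall>x01 x02 w1 w2 t.
        norm (traj f x01 w1 t - traj f x02 w2 t)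
          \<le> \<beta> (norm (x01 - x02)) (real t)
            + \<alpha>1 (seg_norm (\<lambda>i. w1 i - w2 i) t)
            + \<alpha>2 (seg_norm (\<lambda>i. h (traj f x01 w1 i) - h (traj f x02 w2 i)) (Suc t)))"

text \<open>Measurement residual nu(i) = y(i) - h(chi(i)) for i in 0:t, determined by chi(0), omega
  and the data; represented as a sequence that is zero after time t.\<close>

definition resid ::
  "('x \<Rightarrow> 'w \<Rightarrow> 'x) \<Rightarrow> ('x \<Rightarrow> 'y::ab_group_add) \<Rightarrow> (nat \<Rightarrow> 'y) \<Rightarrow> nat \<Rightarrow> 'x \<Rightarrow> (nat \<Rightarrow> 'w)
   \<Rightarrow> nat \<Rightarrow> 'y" where
  "resid f h y t \<chi>0 \<omega> = (\<lambda>i. if i \<le> t then y i - h (traj f \<chi>0 \<omega> i) else 0)"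

definition FIE_feasible ::
  "('x \<Rightarrow> 'w \<Rightarrow> 'x) \<Rightarrow> ('x \<Rightarrow> 'y::ab_group_add) \<Rightarrow> (nat \<Rightarrow> 'w) set \<Rightarrow> (nat \<Rightarrow> 'y) set
   \<Rightarrow> (nat \<Rightarrow> 'y) \<Rightarrow> nat \<Rightarrow> 'x \<Rightarrow> (nat \<Rightarrow> 'w) \<Rightarrow> bool" where
  "FIE_feasible f h Bw Bv y t \<chi>0 \<omega> \<longleftrightarrow> \<omega> \<in> Bw \<and> resid f h y t \<chi>0 \<omega> \<in> Bv"

definition FIE_optimal ::
  "('x::ab_group_add \<Rightarrow> 'w \<Rightarrow> 'x) \<Rightarrow> ('x \<Rightarrow> 'y::ab_group_add) \<Rightarrow> (nat \<Rightarrow> 'w) set \<Rightarrow> (nat \<Rightarrow> 'y) set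
   \<Rightarrow> (nat \<Rightarrow> 'x \<Rightarrow> (nat \<Rightarrow> 'w) \<Rightarrow> (nat \<Rightarrow> 'y) \<Rightarrow> real) \<Rightarrow> (nat \<Rightarrow> 'y) \<Rightarrow> 'x
   \<Rightarrow> nat \<Rightarrow> 'x \<Rightarrow> (nat \<Rightarrow> 'w) \<Rightarrow> bool" where
  "FIE_optimal f h Bw Bv V y xbar t \<chi>0 \<omega> \<longleftrightarrow>
     FIE_feasible f h Bw Bv y t \<chi>0 \<omega> \<and>
     (\<forall>\<chi>0' \<omega>'. FIE_feasible f h Bw Bv y t \<chi>0' \<omega>' \<longrightarrow>
        V t (\<chi>0 - xbar) \<omega> (resid f h y t \<chi>0 \<omega>) \<le> V t (\<chi>0' - xbar) \<omega>' (resid f h y t \<chi>0' \<omega>'))"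

end

theory Submission
  imports Defs
begin


lemma K_pos: "classK \<alpha> \<Longrightarrow> 0 \<le> s \<Longrightarrow> 0 \<le> \<alpha> s"
  unfolding classK_def strict_mono_on_def
  by (metis atLeast_iff less_eq_real_def order_refl)

lemma K_mono: "classK \<alpha> \<Longrightarrow> 0 \<le> a \<Longrightarrow> a \<le> b \<Longrightarrow> \<alpha> a \<le> \<alpha> b"
  unfolding classK_def strict_mono_on_def
  by (metis atLeast_iff order.trans less_eq_real_def)

lemma K_add: "classK a \<Longrightarrow> classK b \<Longrightarrow> classK (\<lambda>s. a s + b s)"
  unfolding classK_def strict_mono_on_def
  by (auto intro!: continuous_intros add_strict_mono)

lemma K_comp: "classK a \<Longrightarrow> classK b \<Longrightarrow> classK (\<lambda>s. a (b s))"
proof -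
  assume A: "classK a" and B: "classK b"
  have img: "b ` {0..} \<subseteq> {0..}" using K_pos[OF B] by auto
  show ?thesis unfolding classK_def
  proof (intro conjI)
    show "continuous_on {0..} (\<lambda>s. a (b s))"
      by (rule continuous_on_compose2[OF _ _ img]) (use A B in \<open>auto simp: classK_def\<close>)
    show "a (b 0) = 0" using A B unfolding classK_def by simp
    show "strict_mono_on {0..} (\<lambda>s. a (b s))"
      using A B img unfolding classK_def strict_mono_on_def by (auto simp: image_subset_iff)
  qed
qed

lemma K_lin: "(c::real) > 0 \<Longrightarrow> classK (\<lambda>s. c * s)"
  unfolding classK_def strict_mono_on_def by (auto intro!: continuous_intros)

lemma K_scale: "(c::real) > 0 \<Longrightarrow> classK a \<Longrightarrow> classK (\<lambda>s. a (c * s))"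
  using K_comp[OF _ K_lin] by blast

lemma K_split2: "classK \<mu> \<Longrightarrow> 0 \<le> a \<Longrightarrow> 0 \<le> b \<Longrightarrow> \<mu> (a + b) \<le> \<mu> (2*a) + \<mu> (2*b)"
proof -
  assume K: "classK \<mu>" "0 \<le> a" "0 \<le> b"
  show ?thesis
  proof (cases "a \<le> b")
    case True
    have "\<mu> (a+b) \<le> \<mu> (2*b)" by (rule K_mono[OF K(1)]) (use K True in auto)
    then show ?thesis using K_pos[OF K(1), of "2*a"] K by auto
  next
    case False
    have "\<mu> (a+b) \<le> \<mu> (2*a)" by (rule K_mono[OF K(1)]) (use K False in auto)
    then show ?thesis using K_pos[OF K(1), of "2*b"] K by auto
  qed
qed

lemma K_split3: "classK \<mu> \<Longrightarrow> 0 \<le> a \<Longrightarrow> 0 \<le> b \<Longrightarrow> 0 \<le> c \<Longrightarrow>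
   \<mu> (a + b + c) \<le> \<mu> (3*a) + \<mu> (3*b) + \<mu> (3*c)"
proof -
  assume K: "classK \<mu>" "0 \<le> a" "0 \<le> b" "0 \<le> c"
  have p: "0 \<le> \<mu> (3*a)" "0 \<le> \<mu> (3*b)" "0 \<le> \<mu> (3*c)" using K K_pos[OF K(1)] by auto
  define m where "m = max a (max b c)"
  have m0: "0 \<le> m" using K by (simp add: m_def)
  have le: "a + b + c \<le> 3 * m" unfolding m_def by linarith
  have "\<mu> (a+b+c) \<le> \<mu> (3*m)" by (rule K_mono[OF K(1)]) (use K le in auto)
  moreover have "m = a \<or> m = b \<or> m = c" unfolding m_def by linarith
  ultimately show ?thesis using p by auto
qed



lemma ext_sm:
  assumes GK: "classK \<gamma>"
  shows "strict_mono (\<lambda>z. if z \<ge> 0 then \<gamma> z else z)"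
proof (rule strict_monoI)
  fix x y :: real assume xy: "x < y"
  have sm0: "\<And>r s. 0 \<le> r \<Longrightarrow> r < s \<Longrightarrow> \<gamma> r < \<gamma> s"
    using GK unfolding classK_def strict_mono_on_def by auto
  have p0: "\<And>s. 0 < s \<Longrightarrow> 0 < \<gamma> s" using sm0[of 0] GK by (auto simp: classK_def)
  show "(if x \<ge> 0 then \<gamma> x else x) < (if y \<ge> 0 then \<gamma> y else y)"
  proof (cases "x \<ge> 0")
    case True then show ?thesis using sm0[of x y] xy by simp
  next
    case False then show ?thesis using p0[of y] xy GK
      by (cases "y = 0") (auto simp: classK_def)
  qed
qed

lemma ext_cont:
  assumes GK: "classK \<gamma>"
  shows "continuous_on UNIV (\<lambda>z. if z \<ge> 0 then \<gamma> z else (z::real))"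
proof -
  let ?g = "\<lambda>z. if z \<ge> 0 then \<gamma> z else (z::real)"
  have c0: "continuous_on {0..} \<gamma>" and z: "\<gamma> 0 = 0" using GK by (auto simp: classK_def)
  have c1: "continuous_on {0..} ?g"
    by (rule continuous_on_eq[OF c0]) auto
  have c2: "continuous_on {..0} ?g"
    by (rule continuous_on_eq[OF continuous_on_id]) (auto simp: z)
  have "continuous_on ({..0} \<union> {0..}) ?g" by (rule continuous_on_closed_Un[OF _ _ c2 c1]) auto
  moreover have "{..0} \<union> {0::real..} = UNIV" by auto
  ultimately show ?thesis by simp
qed

lemma ext_surj:
  assumes G: "classKinf \<gamma>"
  shows "\<exists>z. (if z \<ge> 0 then \<gamma> z else z) = (u::real)"
proof (cases "u \<ge> 0")
  case True
  have GK: "classK \<gamma>" and lim: "filterlim \<gamma> at_top at_top" using G by (auto simp: classKinf_def)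
  let ?g = "\<lambda>z. if z \<ge> 0 then \<gamma> z else (z::real)"
  from lim have "eventually (\<lambda>x. \<gamma> x \<ge> u) at_top" by (simp add: filterlim_at_top)
  then obtain X where X: "\<And>x. x \<ge> X \<Longrightarrow> \<gamma> x \<ge> u" by (auto simp: eventually_at_top_linorder)
  define X' where "X' = max X 0"
  have a: "?g 0 \<le> u" using GK True by (simp add: classK_def)
  have b: "u \<le> ?g X'" using X[of X'] by (simp add: X'_def)
  have c: "continuous_on {0..X'} ?g" using ext_cont[OF GK] by (rule continuous_on_subset) auto
  have "0 \<le> X'" by (simp add: X'_def)
  from IVT'[OF a b this c] show ?thesis by blast
next
  case False then show ?thesis by (intro exI[of _ u]) simp
qed

lemma K_inv:
  assumes G: "classKinf \<gamma>" and A: "classK \<alpha>"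
  shows "\<exists>\<kappa>. classK \<kappa> \<and> (\<forall>a\<ge>0. \<alpha> a \<le> \<kappa> (\<gamma> a))"
proof -
  have GK: "classK \<gamma>" using G by (auto simp: classKinf_def)
  define g' where "g' z = (if z \<ge> 0 then \<gamma> z else z)" for z
  have sm: "strict_mono g'" using ext_sm[OF GK] by (simp add: g'_def[abs_def])
  have cU: "continuous_on UNIV g'" using ext_cont[OF GK] by (simp add: g'_def[abs_def])
  have surj: "\<exists>z. g' z = u" for u using ext_surj[OF G, of u] by (simp add: g'_def)
  define g where "g = inv g'"
  have gg: "g (g' z) = z" for z using sm by (simp add: g_def strict_mono_on_imp_inj_on)
  have g'g: "g' (g u) = u" for u using surj by (metis g_def f_inv_into_f rangeI)
  have cont_g: "isCont g u" for u
  proof -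
    have "isCont g (g' (g u))"
      by (rule isCont_inverse_function[where d=1]) (auto simp: gg intro: continuous_on_interior[OF cU])
    then show ?thesis using g'g by simp
  qed
  have g0: "g 0 = 0" using gg[of 0] GK by (simp add: g'_def classK_def)
  have gsm: "strict_mono g"
    by (rule strict_monoI) (metis g'g sm not_less_iff_gr_or_eq strict_mono_less)
  have gpos: "u \<ge> 0 \<Longrightarrow> g u \<ge> 0" for u using gsm g0 by (metis strict_mono_less_eq)
  define \<kappa> where "\<kappa> u = \<alpha> (g u)" for u
  have Ac: "continuous_on {0..} \<alpha>" and A0: "\<alpha> 0 = 0"
    and Asm: "\<And>r s. 0 \<le> r \<Longrightarrow> r < s \<Longrightarrow> \<alpha> r < \<alpha> s"
    using A unfolding classK_def strict_mono_on_def by auto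
  have gc: "continuous_on {0..} g" by (rule continuous_at_imp_continuous_on) (simp add: cont_g)
  have gimg: "g ` {0..} \<subseteq> {0..}" using gpos by auto
  have "classK \<kappa>" unfolding classK_def
  proof (intro conjI)
    show "continuous_on {0..} \<kappa>" unfolding \<kappa>_def
      by (rule continuous_on_compose2[OF Ac gc gimg])
    show "\<kappa> 0 = 0" using A0 g0 by (simp add: \<kappa>_def)
    show "strict_mono_on {0..} \<kappa>"
    proof (rule strict_mono_onI)
      fix r s :: real assume "r \<in> {0..}" "s \<in> {0..}" "r < s"
      then have "0 \<le> g r" "g r < g s" using gpos gsm by (auto simp: strict_mono_less)
      then show "\<kappa> r < \<kappa> s" unfolding \<kappa>_def by (rule Asm)
    qed
  qed
  moreover have "\<alpha> a \<le> \<kappa> (\<gamma> a)" if "a \<ge> 0" for a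
    using gg[of a] that by (simp add: \<kappa>_def g'_def)
  ultimately show ?thesis by blast
qed



lemma L_props: "classL \<phi> \<Longrightarrow> continuous_on {0..} \<phi> \<and> (\<forall>t\<ge>0. \<phi> t \<ge> 0)
     \<and> (\<forall>s t. 0 \<le> s \<longrightarrow> s \<le> t \<longrightarrow> \<phi> t \<le> \<phi> s) \<and> (\<phi> \<longlongrightarrow> 0) at_top"
  by (simp add: classL_def)

lemma KL_build:
  assumes KK: "classK Kf" and M1: "classK \<mu>1" and M3: "classK \<mu>3"
    and P1: "classL \<phi>1" and P2: "classL \<phi>2"
  shows "classKL (\<lambda>s t. s / (1 + t) + \<mu>1 (2 * s) * \<phi>1 t + Kf (3 * (\<mu>3 s * \<phi>2 t)))"
proof -
  have Kc: "continuous_on {0..} Kf" and K0: "Kf 0 = 0" using KK by (auto simp: classK_def)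
  have M1c: "continuous_on {0..} \<mu>1" and M10: "\<mu>1 0 = 0" using M1 by (auto simp: classK_def)
  have M3c: "continuous_on {0..} \<mu>3" and M30: "\<mu>3 0 = 0" using M3 by (auto simp: classK_def)
  have P1c: "continuous_on {0..} \<phi>1" and P1p: "\<And>t. t \<ge> 0 \<Longrightarrow> \<phi>1 t \<ge> 0"
    and P1m: "\<And>s t. 0 \<le> s \<Longrightarrow> s \<le> t \<Longrightarrow> \<phi>1 t \<le> \<phi>1 s" and P1l: "(\<phi>1 \<longlongrightarrow> 0) at_top"
    using L_props[OF P1] by auto
  have P2c: "continuous_on {0..} \<phi>2" and P2p: "\<And>t. t \<ge> 0 \<Longrightarrow> \<phi>2 t \<ge> 0"
    and P2m: "\<And>s t. 0 \<le> s \<Longrightarrow> s \<le> t \<Longrightarrow> \<phi>2 t \<le> \<phi>2 s" and P2l: "(\<phi>2 \<longlongrightarrow> 0) at_top"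
    using L_props[OF P2] by auto
  have M1p: "\<And>s. s \<ge> 0 \<Longrightarrow> \<mu>1 s \<ge> 0" using K_pos[OF M1] by auto
  have M3p: "\<And>s. s \<ge> 0 \<Longrightarrow> \<mu>3 s \<ge> 0" using K_pos[OF M3] by auto
  show ?thesis unfolding classKL_def
  proof (intro conjI allI impI)
    fix t :: real assume t: "0 \<le> t"
    show "classK (\<lambda>s. s / (1 + t) + \<mu>1 (2 * s) * \<phi>1 t + Kf (3 * (\<mu>3 s * \<phi>2 t)))"
      unfolding classK_def
    proof (intro conjI)
      have c1: "continuous_on {0..} (\<lambda>s. \<mu>1 (2 * s))"
        by (rule continuous_on_compose2[OF M1c continuous_on_mult[OF continuous_on_const continuous_on_id]]) auto
      have c2: "continuous_on {0..} (\<lambda>s. Kf (3 * (\<mu>3 s * \<phi>2 t)))"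
        by (rule continuous_on_compose2[OF Kc continuous_on_mult[OF continuous_on_const continuous_on_mult[OF M3c continuous_on_const]]])
           (auto simp: M3p P2p t)
      have c0: "continuous_on {0..} (\<lambda>s. s / (1 + t))"
        using t by (intro continuous_on_divide continuous_on_id continuous_on_const) auto
      show "continuous_on {0..} (\<lambda>s. s / (1 + t) + \<mu>1 (2 * s) * \<phi>1 t + Kf (3 * (\<mu>3 s * \<phi>2 t)))"
        by (rule continuous_on_add[OF continuous_on_add[OF c0 continuous_on_mult[OF c1 continuous_on_const]] c2])
      show "0 / (1 + t) + \<mu>1 (2 * 0) * \<phi>1 t + Kf (3 * (\<mu>3 0 * \<phi>2 t)) = 0"
        by (simp add: M10 M30 K0)
      show "strict_mono_on {0..} (\<lambda>s. s / (1 + t) + \<mu>1 (2 * s) * \<phi>1 t + Kf (3 * (\<mu>3 s * \<phi>2 t)))"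
      proof (rule strict_mono_onI)
        fix r s :: real assume r: "r \<in> {0..}" and s: "s \<in> {0..}" and rs: "r < s"
        have a: "r / (1+t) < s / (1+t)" using rs t by (simp add: divide_strict_right_mono)
        have "\<mu>1 (2 * r) \<le> \<mu>1 (2 * s)" by (rule K_mono[OF M1]) (use r rs in auto)
        then have b: "\<mu>1 (2 * r) * \<phi>1 t \<le> \<mu>1 (2 * s) * \<phi>1 t"
          using P1p[OF t] by (rule mult_right_mono)
        have "\<mu>3 r \<le> \<mu>3 s" by (rule K_mono[OF M3]) (use r rs in auto)
        then have "3 * (\<mu>3 r * \<phi>2 t) \<le> 3 * (\<mu>3 s * \<phi>2 t)" using P2p[OF t] by (simp add: mult_right_mono)
        then have c: "Kf (3 * (\<mu>3 r * \<phi>2 t)) \<le> Kf (3 * (\<mu>3 s * \<phi>2 t))"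
          by (intro K_mono[OF KK, rotated]) (use r P2p[OF t] M3p in auto)
        show "r / (1 + t) + \<mu>1 (2 * r) * \<phi>1 t + Kf (3 * (\<mu>3 r * \<phi>2 t))
            < s / (1 + t) + \<mu>1 (2 * s) * \<phi>1 t + Kf (3 * (\<mu>3 s * \<phi>2 t))" using a b c by linarith
      qed
    qed
  next
    fix s :: real assume s: "0 \<le> s"
    show "classL (\<lambda>t. s / (1 + t) + \<mu>1 (2 * s) * \<phi>1 t + Kf (3 * (\<mu>3 s * \<phi>2 t)))"
      unfolding classL_def
    proof (intro conjI allI impI)
      have c2: "continuous_on {0..} (\<lambda>t. Kf (3 * (\<mu>3 s * \<phi>2 t)))"
        by (rule continuous_on_compose2[OF Kc continuous_on_mult[OF continuous_on_const continuous_on_mult[OF continuous_on_const P2c]]])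
           (auto simp: M3p P2p s)
      show "continuous_on {0..} (\<lambda>t. s / (1 + t) + \<mu>1 (2 * s) * \<phi>1 t + Kf (3 * (\<mu>3 s * \<phi>2 t)))"
      proof -
        have c0: "continuous_on {0..} (\<lambda>t. s / (1 + t))"
          by (intro continuous_on_divide continuous_on_id continuous_on_const continuous_on_add) auto
        show ?thesis
          by (rule continuous_on_add[OF continuous_on_add[OF c0 continuous_on_mult[OF continuous_on_const P1c]] c2])
      qed
    next
      fix t :: real assume t: "0 \<le> t"
      show "0 \<le> s / (1 + t) + \<mu>1 (2 * s) * \<phi>1 t + Kf (3 * (\<mu>3 s * \<phi>2 t))"
        using s t M1p[of "2 * s"] P1p[OF t] M3p[OF s] P2p[OF t] K_pos[OF KK, of "3 * (\<mu>3 s * \<phi>2 t)"]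
        by simp
    next
      fix a b :: real assume a: "0 \<le> a" and ab: "a \<le> b"
      have x: "s / (1 + b) \<le> s / (1 + a)" by (rule divide_left_mono) (use s a ab in auto)
      have y: "\<mu>1 (2 * s) * \<phi>1 b \<le> \<mu>1 (2 * s) * \<phi>1 a"
        by (rule mult_left_mono[OF P1m[OF a ab]]) (use M1p[of "2 * s"] s in auto)
      have "\<mu>3 s * \<phi>2 b \<le> \<mu>3 s * \<phi>2 a" by (rule mult_left_mono[OF P2m[OF a ab]]) (use M3p[OF s] in auto)
      then have z: "Kf (3 * (\<mu>3 s * \<phi>2 b)) \<le> Kf (3 * (\<mu>3 s * \<phi>2 a))"
        by (intro K_mono[OF KK, rotated]) (use M3p[OF s] P2p[of b] a ab in auto)
      show "s / (1 + b) + \<mu>1 (2 * s) * \<phi>1 b + Kf (3 * (\<mu>3 s * \<phi>2 b))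
          \<le> s / (1 + a) + \<mu>1 (2 * s) * \<phi>1 a + Kf (3 * (\<mu>3 s * \<phi>2 a))" using x y z by linarith
    next
      have "filterlim (\<lambda>t::real. 1 + t) at_top at_top"
        by (rule filterlim_tendsto_add_at_top[OF tendsto_const filterlim_ident])
      then have l1: "((\<lambda>t. s / (1 + t)) \<longlongrightarrow> 0) at_top"
        by (intro tendsto_divide_0[OF tendsto_const] filterlim_at_top_imp_at_infinity)
      have l2: "((\<lambda>t. \<mu>1 (2 * s) * \<phi>1 t) \<longlongrightarrow> 0) at_top"
        using tendsto_mult[OF tendsto_const P1l, of "\<mu>1 (2 * s)"] by simp
      have l3': "((\<lambda>t. 3 * (\<mu>3 s * \<phi>2 t)) \<longlongrightarrow> 0) at_top"
        using tendsto_mult[OF tendsto_const tendsto_mult[OF tendsto_const P2l, of "\<mu>3 s"], of 3] by simp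
      have ev: "\<forall>\<^sub>F t in at_top. 3 * (\<mu>3 s * \<phi>2 t) \<in> {0..}"
        using eventually_ge_at_top[of "0::real"] by eventually_elim (simp add: M3p[OF s] P2p)
      have l3: "((\<lambda>t. Kf (3 * (\<mu>3 s * \<phi>2 t))) \<longlongrightarrow> Kf 0) at_top"
        by (rule continuous_on_tendsto_compose[OF Kc l3' _ ev]) simp
      show "((\<lambda>t. s / (1 + t) + \<mu>1 (2 * s) * \<phi>1 t + Kf (3 * (\<mu>3 s * \<phi>2 t))) \<longlongrightarrow> 0) at_top"
        using tendsto_add[OF tendsto_add[OF l1 l2] l3] by (simp add: K0)
    qed
  qed
qed



lemma seg_norm_nonneg: "0 \<le> seg_norm w k"
  unfolding seg_norm_def by (rule Max_ge) auto

lemma seg_norm_ge: "i < k \<Longrightarrow> norm (w i) \<le> seg_norm w k"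
  unfolding seg_norm_def by (rule Max_ge) auto

lemma seg_norm_le: "0 \<le> c \<Longrightarrow> (\<And>i. i < k \<Longrightarrow> norm (w i) \<le> c) \<Longrightarrow> seg_norm w k \<le> c"
  unfolding seg_norm_def by (rule Max.boundedI) auto

lemma seg_norm_cong: assumes "\<And>i. i < k \<Longrightarrow> w i = w' i" shows "seg_norm w k = seg_norm w' k"
proof -
  have "(\<lambda>i. norm (w i)) ` {..<k} = (\<lambda>i. norm (w' i)) ` {..<k}"
    by (rule image_cong) (auto simp: assms)
  then show ?thesis unfolding seg_norm_def by simp
qed

theorem corollary1:
  fixes f :: "'x::euclidean_space \<Rightarrow> 'w::euclidean_space \<Rightarrow> 'x"
    and h :: "'x \<Rightarrow> 'y::euclidean_space"
    and \<beta> :: "real \<Rightarrow> real \<Rightarrow> real" and \<alpha>1 \<alpha>2 :: "real \<Rightarrow> real"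
    and V :: "nat \<Rightarrow> 'x \<Rightarrow> (nat \<Rightarrow> 'w) \<Rightarrow> (nat \<Rightarrow> 'y) \<Rightarrow> real"
    and Bw :: "(nat \<Rightarrow> 'w) set" and Bv :: "(nat \<Rightarrow> 'y) set"
    and \<rho>l \<rho> :: "real \<Rightarrow> real \<Rightarrow> real" and \<gamma>lw \<gamma>lv \<gamma>w \<gamma>v :: "real \<Rightarrow> real"
    and \<mu>1 \<mu>2 \<mu>3 \<phi>1 \<phi>2 :: "real \<Rightarrow> real"
    and x0 xbar :: 'x and w :: "nat \<Rightarrow> 'w" and v y :: "nat \<Rightarrow> 'y"
    and xhat :: "nat \<Rightarrow> 'x" and what :: "nat \<Rightarrow> nat \<Rightarrow> 'w"
  assumes f_cont: "continuous_on UNIV (\<lambda>p. f (fst p) (snd p))"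
    and h_cont: "continuous_on UNIV h"
    and Bw_bounded: "\<forall>\<omega>\<in>Bw. bounded (range \<omega>)"
    and Bv_bounded: "\<forall>\<nu>\<in>Bv. bounded (range \<nu>)"
    and Bv_trunc: "\<forall>\<nu>\<in>Bv. \<forall>t. (\<lambda>i. if i \<le> t then \<nu> i else 0) \<in> Bv"
    and w_in: "w \<in> Bw" and v_in: "v \<in> Bv"
    and meas: "\<forall>i. y i = h (traj f x0 w i) + v i"
    \<comment> \<open>(a) i-IOSS\<close>
    and ioss: "iIOSS f h \<beta> \<alpha>1 \<alpha>2"
    \<comment> \<open>(b) the infimum is attained: (xhat t, what t) is an optimal solution at every t\<close>
    and opt: "\<forall>t. FIE_optimal f h Bw Bv V y xbar t (xhat t) (what t)"
    and V_cont: "\<forall>t. continuous_on UNIV (\<lambda>p. V t (fst p) (fst (snd p)) (snd (snd p)))"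
    and \<rho>l_KL: "classKL \<rho>l" and \<rho>_KL: "classKL \<rho>"
    and \<gamma>_Kinf: "classKinf \<gamma>lw" "classKinf \<gamma>lv" "classKinf \<gamma>w" "classKinf \<gamma>v"
    and V_bounds: "\<forall>t d \<omega> \<nu>. \<omega> \<in> Bw \<longrightarrow> \<nu> \<in> Bv \<longrightarrow>
        \<rho>l (norm d) (real t) + \<gamma>lw (seg_norm \<omega> t) + \<gamma>lv (seg_norm \<nu> (Suc t)) \<le> V t d \<omega> \<nu>
      \<and> V t d \<omega> \<nu> \<le> \<rho> (norm d) (real t) + \<gamma>w (seg_norm \<omega> t) + \<gamma>v (seg_norm \<nu> (Suc t))"
    \<comment> \<open>(c) product structure and the compatibility condition\<close>
    and \<mu>_K: "classK \<mu>1" "classK \<mu>2" "classK \<mu>3"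
    and \<phi>_L: "classL \<phi>1" "classL \<phi>2"
    and \<beta>_prod: "\<forall>s\<ge>0. \<forall>t\<ge>0. \<beta> s t = \<mu>1 s * \<phi>1 t"
    and \<rho>l_prod: "\<forall>s\<ge>0. \<forall>t\<ge>0. \<rho>l s t = \<mu>2 s * \<phi>2 t"
    and \<rho>_prod: "\<forall>s\<ge>0. \<forall>t\<ge>0. \<rho> s t = \<mu>3 s * \<phi>2 t"
    and compat: "\<forall>\<pi>. classK \<pi> \<longrightarrow> (\<exists>\<pi>'. classK \<pi>' \<and>
        (\<forall>s t r. 0 \<le> s \<longrightarrow> 0 \<le> t \<longrightarrow> 0 \<le> r \<longrightarrow> \<mu>2 r * \<phi>2 t \<le> \<pi> s \<longrightarrow>
           \<mu>1 (4 * r) * \<phi>1 t \<le> \<pi>' s))"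
  shows "\<exists>\<beta>x \<alpha>w \<alpha>v. classKL \<beta>x \<and> classK \<alpha>w \<and> classK \<alpha>v \<and>
    (\<forall>t. norm (traj f x0 w t - traj f (xhat t) (what t) t)
       \<le> \<beta>x (norm (x0 - xbar)) (real t) + \<alpha>w (seg_norm w t) + \<alpha>v (seg_norm v (Suc t)))"
proof -
  have \<beta>K: "classKL \<beta>" and \<alpha>1K: "classK \<alpha>1" and \<alpha>2K: "classK \<alpha>2"
    and IO: "\<And>x01 x02 w1 w2 t. norm (traj f x01 w1 t - traj f x02 w2 t)
          \<le> \<beta> (norm (x01 - x02)) (real t)
            + \<alpha>1 (seg_norm (\<lambda>i. w1 i - w2 i) t)
            + \<alpha>2 (seg_norm (\<lambda>i. h (traj f x01 w1 i) - h (traj f x02 w2 i)) (Suc t))"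
    using ioss unfolding iIOSS_def by blast+
  have idK: "classK (\<lambda>s. s)"
    unfolding classK_def strict_mono_on_def by (auto simp: continuous_on_id)
  obtain \<pi>' where \<pi>'K: "classK \<pi>'" and \<pi>c: "\<And>s t r. 0 \<le> s \<Longrightarrow> 0 \<le> t \<Longrightarrow> 0 \<le> r \<Longrightarrow>
        \<mu>2 r * \<phi>2 t \<le> s \<Longrightarrow> \<mu>1 (4 * r) * \<phi>1 t \<le> \<pi>' s"
    using compat idK by blast
  have \<gamma>K: "classK \<gamma>lw" "classK \<gamma>lv" "classK \<gamma>w" "classK \<gamma>v"
    using \<gamma>_Kinf by (auto simp: classKinf_def)
  obtain \<kappa>1 where \<kappa>1K: "classK \<kappa>1" and \<kappa>1b: "\<And>a. a \<ge> 0 \<Longrightarrow> \<alpha>1 (2 * a) \<le> \<kappa>1 (\<gamma>lw a)"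
    using K_inv[OF \<gamma>_Kinf(1) K_scale[of 2 \<alpha>1]] \<alpha>1K by auto
  obtain \<kappa>2 where \<kappa>2K: "classK \<kappa>2" and \<kappa>2b: "\<And>a. a \<ge> 0 \<Longrightarrow> \<alpha>2 (2 * a) \<le> \<kappa>2 (\<gamma>lv a)"
    using K_inv[OF \<gamma>_Kinf(2) K_scale[of 2 \<alpha>2]] \<alpha>2K by auto
  define Kf where "Kf u = \<pi>' u + \<kappa>1 u + \<kappa>2 u" for u
  have KfK: "classK Kf" unfolding Kf_def[abs_def] by (intro K_add \<pi>'K \<kappa>1K \<kappa>2K)
  define \<beta>x where "\<beta>x = (\<lambda>s t. s / (1 + t) + \<mu>1 (2 * s) * \<phi>1 t + Kf (3 * (\<mu>3 s * \<phi>2 t)))"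
  define \<alpha>w where "\<alpha>w = (\<lambda>s. \<alpha>1 (2 * s) + Kf (3 * \<gamma>w s))"
  define \<alpha>v where "\<alpha>v = (\<lambda>s. \<alpha>2 (2 * s) + Kf (3 * \<gamma>v s))"
  have \<beta>xK: "classKL \<beta>x" unfolding \<beta>x_def by (rule KL_build[OF KfK \<mu>_K(1) \<mu>_K(3) \<phi>_L])
  have \<alpha>wK: "classK \<alpha>w" unfolding \<alpha>w_def
    by (rule K_add[OF K_scale[OF _ \<alpha>1K] K_comp[OF K_scale[OF _ KfK] \<gamma>K(3)]]) auto
  have \<alpha>vK: "classK \<alpha>v" unfolding \<alpha>v_def
    by (rule K_add[OF K_scale[OF _ \<alpha>2K] K_comp[OF K_scale[OF _ KfK] \<gamma>K(4)]]) auto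
  have P1: "\<And>t. t \<ge> 0 \<Longrightarrow> \<phi>1 t \<ge> 0" and P2: "\<And>t. t \<ge> 0 \<Longrightarrow> \<phi>2 t \<ge> 0"
    using \<phi>_L by (auto simp: classL_def)
  have main: "norm (traj f x0 w t - traj f (xhat t) (what t) t)
       \<le> \<beta>x (norm (x0 - xbar)) (real t) + \<alpha>w (seg_norm w t) + \<alpha>v (seg_norm v (Suc t))" for t
  proof -
    define d where "d = norm (x0 - xbar)"
    define xh where "xh = xhat t"
    define wh where "wh = what t"
    define nuh where "nuh = resid f h y t xh wh"
    define r where "r = norm (xh - xbar)"
    define a where "a = seg_norm wh t"
    define b where "b = seg_norm nuh (Suc t)"
    define W where "W = seg_norm w t"
    define Vn where "Vn = seg_norm v (Suc t)"
    define tt where "tt = real t"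
    have tt0: "tt \<ge> 0" by (simp add: tt_def)
    have d0: "d \<ge> 0" and r0: "r \<ge> 0" by (auto simp: d_def r_def)
    have a0: "a \<ge> 0" and b0: "b \<ge> 0" and W0: "W \<ge> 0" and Vn0: "Vn \<ge> 0"
      by (auto simp: a_def b_def W_def Vn_def seg_norm_nonneg)
    have optt: "FIE_optimal f h Bw Bv V y xbar t xh wh" using opt by (simp add: xh_def wh_def)
    have whB: "wh \<in> Bw" and nuhB: "nuh \<in> Bv"
      using optt by (auto simp: FIE_optimal_def FIE_feasible_def nuh_def)
    define vt where "vt = resid f h y t x0 w"
    have vt_eq: "vt = (\<lambda>i. if i \<le> t then v i else 0)"
      by (auto simp: vt_def resid_def meas fun_eq_iff)
    have vtB: "vt \<in> Bv" using Bv_trunc v_in by (simp add: vt_eq)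
    have feas0: "FIE_feasible f h Bw Bv y t x0 w"
      using w_in vtB by (simp add: FIE_feasible_def vt_def)
    have Vopt: "V t (xh - xbar) wh nuh \<le> V t (x0 - xbar) w vt"
      using optt feas0 unfolding FIE_optimal_def nuh_def vt_def by blast
    have segvt: "seg_norm vt (Suc t) = Vn"
      unfolding Vn_def by (rule seg_norm_cong) (simp add: vt_eq)
    have "V t (x0 - xbar) w vt \<le> \<rho> (norm (x0 - xbar)) (real t) + \<gamma>w (seg_norm w t) + \<gamma>v (seg_norm vt (Suc t))"
      using V_bounds w_in vtB by blast
    then have up: "V t (x0 - xbar) w vt \<le> \<rho> d tt + \<gamma>w W + \<gamma>v Vn"
      using segvt by (simp add: d_def tt_def W_def)
    have "\<rho>l (norm (xh - xbar)) (real t) + \<gamma>lw (seg_norm wh t) + \<gamma>lv (seg_norm nuh (Suc t)) \<le> V t (xh - xbar) wh nuh"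
      using V_bounds whB nuhB by blast
    then have lo: "\<rho>l r tt + \<gamma>lw a + \<gamma>lv b \<le> V t (xh - xbar) wh nuh"
      by (simp add: r_def tt_def a_def b_def)
    have \<rho>e: "\<rho> d tt = \<mu>3 d * \<phi>2 tt" using \<rho>_prod d0 tt0 by simp
    have \<rho>le: "\<rho>l r tt = \<mu>2 r * \<phi>2 tt" using \<rho>l_prod r0 tt0 by simp
    define U where "U = \<mu>3 d * \<phi>2 tt + \<gamma>w W + \<gamma>v Vn"
    have n1: "\<mu>2 r * \<phi>2 tt \<ge> 0" using K_pos[OF \<mu>_K(2) r0] P2[OF tt0] by simp
    have n2: "\<gamma>lw a \<ge> 0" "\<gamma>lv b \<ge> 0" using K_pos[OF \<gamma>K(1) a0] K_pos[OF \<gamma>K(2) b0] by auto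
    have n3: "\<mu>3 d * \<phi>2 tt \<ge> 0" using K_pos[OF \<mu>_K(3) d0] P2[OF tt0] by simp
    have n4: "\<gamma>w W \<ge> 0" "\<gamma>v Vn \<ge> 0" using K_pos[OF \<gamma>K(3) W0] K_pos[OF \<gamma>K(4) Vn0] by auto
    have sum: "\<mu>2 r * \<phi>2 tt + \<gamma>lw a + \<gamma>lv b \<le> U"
      using up lo Vopt \<rho>e \<rho>le unfolding U_def by linarith
    have h1: "\<mu>2 r * \<phi>2 tt \<le> U" and h2: "\<gamma>lw a \<le> U" and h3: "\<gamma>lv b \<le> U" and U0: "U \<ge> 0"
      using sum n1 n2 n3 n4 unfolding U_def by linarith+
    have io: "norm (traj f x0 w t - traj f xh wh t)
          \<le> \<beta> (norm (x0 - xh)) tt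
            + \<alpha>1 (seg_norm (\<lambda>i. w i - wh i) t)
            + \<alpha>2 (seg_norm (\<lambda>i. h (traj f x0 w i) - h (traj f xh wh i)) (Suc t))"
      using IO unfolding tt_def .
    define n where "n = norm (x0 - xh)"
    have n0: "n \<ge> 0" by (simp add: n_def)
    have ndr: "n \<le> d + r"
    proof -
      have "x0 - xh = (x0 - xbar) - (xh - xbar)" by simp
      then have "n = norm ((x0 - xbar) - (xh - xbar))" by (simp add: n_def)
      also have "\<dots> \<le> norm (x0 - xbar) + norm (xh - xbar)" by (rule norm_triangle_ineq4)
      finally show ?thesis by (simp add: d_def r_def)
    qed
    have \<beta>e: "\<beta> n tt = \<mu>1 n * \<phi>1 tt" using \<beta>_prod n0 tt0 by simp
    have m1: "\<mu>1 n \<le> \<mu>1 (d + r)" by (rule K_mono[OF \<mu>_K(1)]) (use n0 ndr in auto)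
    have m2: "\<mu>1 (d + r) \<le> \<mu>1 (2 * d) + \<mu>1 (2 * r)" by (rule K_split2[OF \<mu>_K(1) d0 r0])
    have m3: "\<mu>1 (2 * r) \<le> \<mu>1 (4 * r)" by (rule K_mono[OF \<mu>_K(1)]) (use r0 in auto)
    have m4: "\<mu>1 (4 * r) * \<phi>1 tt \<le> \<pi>' U" by (rule \<pi>c[OF U0 tt0 r0 h1])
    have "\<mu>1 n * \<phi>1 tt \<le> (\<mu>1 (2 * d) + \<mu>1 (4 * r)) * \<phi>1 tt"
      by (rule mult_right_mono) (use m1 m2 m3 P1[OF tt0] in auto)
    then have B1: "\<beta> n tt \<le> \<mu>1 (2 * d) * \<phi>1 tt + \<pi>' U"
      using m4 \<beta>e by (simp add: distrib_right)
    have s1: "seg_norm (\<lambda>i. w i - wh i) t \<le> W + a"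
    proof (rule seg_norm_le)
      show "0 \<le> W + a" using W0 a0 by simp
      fix i assume "i < t"
      then have "norm (w i) \<le> W" "norm (wh i) \<le> a"
        by (auto simp: W_def a_def intro: seg_norm_ge)
      then show "norm (w i - wh i) \<le> W + a" using norm_triangle_ineq4[of "w i" "wh i"] by linarith
    qed
    have A1: "\<alpha>1 (seg_norm (\<lambda>i. w i - wh i) t) \<le> \<alpha>1 (2 * W) + \<kappa>1 U"
    proof -
      have "\<alpha>1 (seg_norm (\<lambda>i. w i - wh i) t) \<le> \<alpha>1 (W + a)"
        by (rule K_mono[OF \<alpha>1K]) (use s1 seg_norm_nonneg in auto)
      also have "\<dots> \<le> \<alpha>1 (2 * W) + \<alpha>1 (2 * a)" by (rule K_split2[OF \<alpha>1K W0 a0])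
      also have "\<alpha>1 (2 * a) \<le> \<kappa>1 U"
        using \<kappa>1b[OF a0] K_mono[OF \<kappa>1K n2(1) h2] by linarith
      finally show ?thesis by simp
    qed
    have s2: "seg_norm (\<lambda>i. h (traj f x0 w i) - h (traj f xh wh i)) (Suc t) \<le> Vn + b"
    proof (rule seg_norm_le)
      show "0 \<le> Vn + b" using Vn0 b0 by simp
      fix i assume i: "i < Suc t"
      then have "norm (v i) \<le> Vn" "norm (nuh i) \<le> b"
        by (auto simp: Vn_def b_def intro: seg_norm_ge)
      moreover have "h (traj f x0 w i) - h (traj f xh wh i) = nuh i - v i"
        using i meas[rule_format, of i] by (simp add: nuh_def resid_def algebra_simps)
      ultimately have "norm (nuh i - v i) \<le> Vn + b"
        using norm_triangle_ineq4[of "nuh i" "v i"] by linarith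
      then show "norm (h (traj f x0 w i) - h (traj f xh wh i)) \<le> Vn + b"
        by (simp only: \<open>h (traj f x0 w i) - h (traj f xh wh i) = nuh i - v i\<close>)
    qed
    have A2: "\<alpha>2 (seg_norm (\<lambda>i. h (traj f x0 w i) - h (traj f xh wh i)) (Suc t)) \<le> \<alpha>2 (2 * Vn) + \<kappa>2 U"
    proof -
      have "\<alpha>2 (seg_norm (\<lambda>i. h (traj f x0 w i) - h (traj f xh wh i)) (Suc t)) \<le> \<alpha>2 (Vn + b)"
        by (rule K_mono[OF \<alpha>2K]) (use s2 seg_norm_nonneg in auto)
      also have "\<dots> \<le> \<alpha>2 (2 * Vn) + \<alpha>2 (2 * b)" by (rule K_split2[OF \<alpha>2K Vn0 b0])
      also have "\<alpha>2 (2 * b) \<le> \<kappa>2 U"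
        using \<kappa>2b[OF b0] K_mono[OF \<kappa>2K n2(2) h3] by linarith
      finally show ?thesis by simp
    qed
    have KU: "Kf U \<le> Kf (3 * (\<mu>3 d * \<phi>2 tt)) + Kf (3 * \<gamma>w W) + Kf (3 * \<gamma>v Vn)"
      unfolding U_def by (rule K_split3[OF KfK n3 n4])
    have q0: "d / (1 + tt) \<ge> 0" using d0 tt0 by simp
    have "norm (traj f x0 w t - traj f xh wh t)
       \<le> \<beta>x d tt + \<alpha>w W + \<alpha>v Vn"
      using io B1 A1 A2 KU q0 unfolding \<beta>x_def \<alpha>w_def \<alpha>v_def Kf_def n_def by linarith
    then show ?thesis by (simp add: d_def tt_def W_def Vn_def xh_def wh_def)
  qed
  show ?thesis using \<beta>xK \<alpha>wK \<alpha>vK main by blast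
qed


end
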